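(* Let $G=(V,E,w)$ be an $\mathbb{N}^k$-labeled complete directed graph, let $Q\subseteq E$ be a set of pairwise vertex-disjoint paths, and let $G'=(V',E',w')=\mathrm{contract}_Q(G)$. Then for every Hamiltonian cycle $T'\subseteq E'$ of $G'$, the edge set $T=\mathrm{expand}_Q(T')$ is a Hamiltonian cycle of $G$ with $w(T)=w'(T')+w(Q)$.
   Context: An $\mathbb{N}^k$-labeled complete directed graph is $G=(V,E,w)$ with $V$ finite, $E=\{(u,v)\in V\times V: u\neq v\}$, $w\colon E\to\mathbb{N}^k$; $w$ is extended to edge sets by summation. Paths and cycles are identified with their edge sets; a Hamiltonian cycle visits every vertex exactly once. For an edge $(u,v)\in E$: $\mathrm{contract}_{(u,v)}(G)=(V\setminus\{v\},\{e\in E: v \text{ not incident to } e\},w')$ where $w'(x,y)=w(x,y)$ for $x\ne u$ and $w'(u,z)=w(v,z)$. For a path $P=u_0,e_1,u_1,\dots,e_r,u_r$: $\mathrm{contract}_P(G)=\mathrm{contract}_{e_1}(\mathrm{contract}_{e_2}(\cdots\mathrm{contract}_{e_r}(G)\cdots))$. For a set $Q$ of pairwise vertex-disjoint paths $P_1,\dots,P_r$: $\mathrm{contract}_Q(G)=\mathrm{contract}_{P_1}(\cdots\mathrm{contract}_{P_r}(G)\cdots)$. For an edge set $T$ (Hamiltonian cycle of a contracted graph): $\mathrm{expand}_{(u,v)}(T)=\{(x,y)\in T: x\ne u\}\cup\{(u,v)\}\cup\{(v,x):(u,x)\in T\}$; $\mathrm{expand}_P(T)=\mathrm{expand}_{e_r}(\mathrm{expand}_{e_{r-1}}(\cdots\mathrm{expand}_{e_1}(T)\cdots))$;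 $\mathrm{expand}_Q(T)=\mathrm{expand}_{P_r}(\cdots\mathrm{expand}_{P_1}(T)\cdots)$. Here $w(Q)$ is the total weight of all edges of all paths in $Q$. *)

theory Defs
  imports "HOL-Analysis.Finite_Cartesian_Product"
begin

text \<open>An N^k-labeled complete directed graph is represented by its finite vertex
set V together with a labelling w of ordered pairs; the edge set is determined
by V (all pairs of distinct vertices of V).\<close>

type_synonym ('v, 'k) lgraph = "'v set \<times> ('v \<times> 'v \<Rightarrow> nat ^ 'k)"

definition edges :: "'v set \<Rightarrow> ('v \<times> 'v) set" where
  "edges V = {(u, v). u \<in> V \<and> v \<in> V \<and> u \<noteq> v}"

fun contract_edge :: "'v \<times> 'v \<Rightarrow> ('v, 'k) lgraph \<Rightarrow> ('v, 'k) lgraph" where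
  "contract_edge (u, v) (V, w) =
     (V - {v}, (\<lambda>(x, y). if x = u then w (v, y) else w (x, y)))"

text \<open>A path u0,e1,u1,...,er,ur is given by its vertex list [u0,...,ur];
its edges are e_i = (u_(i-1), u_i).\<close>
definition path_edge_list :: "'v list \<Rightarrow> ('v \<times> 'v) list" where
  "path_edge_list us = zip us (tl us)"

definition path_edges :: "'v list \<Rightarrow> ('v \<times> 'v) set" where
  "path_edges us = set (path_edge_list us)"

definition is_path :: "'v set \<Rightarrow> 'v list \<Rightarrow> bool" where
  "is_path V us \<longleftrightarrow> us \<noteq> [] \<and> distinct us \<and> set us \<subseteq> V"

definition contract_path :: "'v list \<Rightarrow> ('v, 'k) lgraph \<Rightarrow> ('v, 'k) lgraph" where
  "contract_path us G = foldr contract_edge (path_edge_list us) G"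

definition contract_paths :: "'v list list \<Rightarrow> ('v, 'k) lgraph \<Rightarrow> ('v, 'k) lgraph" where
  "contract_paths Qs G = foldr contract_path Qs G"

definition expand_edge :: "'v \<times> 'v \<Rightarrow> ('v \<times> 'v) set \<Rightarrow> ('v \<times> 'v) set" where
  "expand_edge e T = (case e of (u, v) \<Rightarrow>
     {(x, y) \<in> T. x \<noteq> u} \<union> {(u, v)} \<union> {(v, x) | x. (u, x) \<in> T})"

definition expand_path :: "'v list \<Rightarrow> ('v \<times> 'v) set \<Rightarrow> ('v \<times> 'v) set" where
  "expand_path us T = foldl (\<lambda>S e. expand_edge e S) T (path_edge_list us)"

definition expand_paths :: "'v list list \<Rightarrow> ('v \<times> 'v) set \<Rightarrow> ('v \<times> 'v) set" where
  "expand_paths Qs T = foldl (\<lambda>S P. expand_path P S) T Qs"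

text \<open>Hamiltonian cycle (as an edge set) of the complete digraph on V:
a directed cycle through every vertex exactly once (at least 2 vertices,
since there are no loops).\<close>
definition ham_cycle :: "'v set \<Rightarrow> ('v \<times> 'v) set \<Rightarrow> bool" where
  "ham_cycle V T \<longleftrightarrow> (\<exists>vs. distinct vs \<and> set vs = V \<and> length vs \<ge> 2 \<and>
      T = {(vs ! i, vs ! ((i + 1) mod length vs)) | i. i < length vs})"

end

theory Submission
  imports Defs
begin

definition cyc :: "'v list \<Rightarrow> ('v \<times> 'v) set" where
  "cyc l = set (zip l (tl l @ [hd l]))"

fun sig :: "'v list list \<Rightarrow> 'v \<Rightarrow> 'v" where
  "sig [] x = x"
| "sig (P # Qs) x = (if x = hd P then last P else sig Qs x)"

fun disj :: "'v list list \<Rightarrow> bool" where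
  "disj [] = True"
| "disj (P # Qs) = ((\<forall>Q\<in>set Qs. set P \<inter> set Q = {}) \<and> disj Qs)"

lemma L1: "xs \<noteq> [] \<Longrightarrow> zip xs (tl xs @ [a]) = zip xs (tl xs) @ [(last xs, a)]"
proof (induction xs)
  case Nil then show ?case by simp
next
  case (Cons x xs) then show ?case by (cases xs) auto
qed

lemma L2: "xs \<noteq> [] \<Longrightarrow> zs \<noteq> [] \<Longrightarrow>
  zip (xs @ zs) (tl (xs @ zs)) = zip xs (tl xs) @ [(last xs, hd zs)] @ zip zs (tl zs)"
proof (induction xs)
  case Nil then show ?case by simp
next
  case (Cons x xs) then show ?case by (cases xs; cases zs) auto
qed

lemma cyc_app: "xs \<noteq> [] \<Longrightarrow> zs \<noteq> [] \<Longrightarrow>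
  cyc (xs @ zs) = set (zip xs (tl xs)) \<union> {(last xs, hd zs)} \<union> set (zip zs (tl zs)) \<union> {(last zs, hd xs)}"
proof -
  assume a: "xs \<noteq> []" "zs \<noteq> []"
  have "cyc (xs @ zs) = set (zip (xs @ zs) (tl (xs @ zs)) @ [(last zs, hd xs)])"
    unfolding cyc_def using L1[of "xs @ zs" "hd xs"] a by simp
  also have "\<dots> = set (zip xs (tl xs)) \<union> {(last xs, hd zs)} \<union> set (zip zs (tl zs)) \<union> {(last zs, hd xs)}"
    using L2[OF a] by auto
  finally show ?thesis .
qed

lemma cyc_rot: "xs \<noteq> [] \<Longrightarrow> zs \<noteq> [] \<Longrightarrow> cyc (xs @ zs) = cyc (zs @ xs)"
  using cyc_app[of xs zs] cyc_app[of zs xs] by auto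

lemma cyc_single_head: "ys \<noteq> [] \<Longrightarrow>
  cyc (u # ys) = {(u, hd ys)} \<union> set (zip ys (tl ys)) \<union> {(last ys, u)}"
  using cyc_app[of "[u]" ys] by auto

lemma fst_zip: "(a, b) \<in> set (zip xs ys) \<Longrightarrow> a \<in> set xs"
  by (meson set_zip_leftD)
lemma snd_zip: "(a, b) \<in> set (zip xs ys) \<Longrightarrow> b \<in> set ys"
  by (meson set_zip_rightD)

lemma fst_cyc: "(a, b) \<in> cyc l \<Longrightarrow> a \<in> set l"
  unfolding cyc_def by (rule fst_zip)

lemma expand_edge_cyc:
  assumes "ys \<noteq> []" "u \<notin> set ys" "v \<notin> set ys" "u \<noteq> v"
  shows "expand_edge (u, v) (cyc (u # ys)) = cyc (u # v # ys)"
proof -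
  have c1: "cyc (u # ys) = {(u, hd ys)} \<union> set (zip ys (tl ys)) \<union> {(last ys, u)}"
    using cyc_single_head[OF assms(1)] .
  have c2: "cyc (u # v # ys) = {(u, v)} \<union> {(v, hd ys)} \<union> set (zip ys (tl ys)) \<union> {(last ys, u)}"
    using cyc_app[of "[u, v]" ys] assms(1) by auto
  have ly: "last ys \<in> set ys" using assms(1) by simp
  show ?thesis unfolding expand_edge_def c1 c2
    using assms ly by (auto dest: fst_zip)
qed

lemma pel_cons2: "path_edge_list (u # v # r) = (u, v) # path_edge_list (v # r)"
  unfolding path_edge_list_def by simp

lemma expand_path_cyc:
  "distinct P \<Longrightarrow> P \<noteq> [] \<Longrightarrow> ys \<noteq> [] \<Longrightarrow> set P \<inter> set ys = {} \<Longrightarrow>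
   expand_path P (cyc (hd P # ys)) = cyc (P @ ys)"
proof (induction P arbitrary: ys)
  case Nil then show ?case by simp
next
  case (Cons u rest)
  show ?case
  proof (cases rest)
    case Nil
    then show ?thesis unfolding expand_path_def path_edge_list_def by simp
  next
    case (Cons v rest')
    have e: "expand_edge (u, v) (cyc (u # ys)) = cyc (u # v # ys)"
      using Cons.prems Cons by (intro expand_edge_cyc) auto
    have r: "cyc (u # v # ys) = cyc (v # ys @ [u])"
      using cyc_rot[of "[u]" "v # ys"] by simp
    have ih: "expand_path rest (cyc (hd rest # ys @ [u])) = cyc (rest @ ys @ [u])"
      using Cons.prems Cons by (intro Cons.IH) auto
    have r2: "cyc (rest @ ys @ [u]) = cyc ((u # rest) @ ys)"
      using cyc_rot[of "[u]" "rest @ ys"] Cons by simp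
    have "expand_path (u # rest) (cyc (hd (u # rest) # ys))
        = expand_path rest (expand_edge (u, v) (cyc (u # ys)))"
      unfolding expand_path_def using Cons by (simp add: pel_cons2)
    then show ?thesis using e r ih r2 Cons by simp
  qed
qed

lemma sum_step:
  fixes W W1 w :: "'v \<times> 'v \<Rightarrow> 'a::comm_monoid_add"
  assumes "distinct P" "P \<noteq> []" "ys \<noteq> []" "set P \<inter> set ys = {}"
    and "W (hd P, hd ys) = W1 (last P, hd ys)"
    and "\<forall>x\<in>set ys. \<forall>y. W1 (x, y) = W (x, y)"
    and "\<forall>x\<in>set P. \<forall>y. W1 (x, y) = w (x, y)"
  shows "sum W1 (cyc (P @ ys)) = sum W (cyc (hd P # ys)) + sum w (path_edges P)"
proof -
  define A where "A = set (zip P (tl P))"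
  define C where "C = set (zip ys (tl ys)) \<union> {(last ys, hd P)}"
  have c1: "cyc (P @ ys) = A \<union> {(last P, hd ys)} \<union> C"
    using cyc_app[of P ys] assms unfolding A_def C_def by auto
  have c2: "cyc (hd P # ys) = insert (hd P, hd ys) C"
    using cyc_single_head[of ys "hd P"] assms unfolding C_def by auto
  have hy: "hd ys \<in> set ys" "last ys \<in> set ys" using assms by auto
  have hp: "hd P \<in> set P" "last P \<in> set P" using assms by auto
  have fC: "\<And>a b. (a, b) \<in> C \<Longrightarrow> a \<in> set ys" unfolding C_def using hy by (auto dest: fst_zip)
  have fA: "\<And>a b. (a, b) \<in> A \<Longrightarrow> a \<in> set P \<and> b \<in> set P" unfolding A_def
  proof -
    fix a b assume ab: "(a, b) \<in> set (zip P (tl P))"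
    have "b \<in> set (tl P)" using snd_zip[OF ab] .
    then have "b \<in> set P" by (meson list.set_sel(2) assms(2))
    then show "a \<in> set P \<and> b \<in> set P" using fst_zip[OF ab] by simp
  qed
  have finA: "finite A" "finite C" unfolding A_def C_def by auto
  have d1: "(last P, hd ys) \<notin> A" using fA hy assms(4) by blast
  have d2: "A \<inter> C = {}" using fA fC assms(4) by fastforce
  have d3: "(last P, hd ys) \<notin> C" using fC hp assms(4) by blast
  have d4: "(hd P, hd ys) \<notin> C" using fC hp assms(4) by blast
  have "sum W1 (cyc (P @ ys)) = sum W1 (insert (last P, hd ys) A) + sum W1 C"
    unfolding c1 using d2 d3 finA by (subst sum.union_disjoint) auto
  also have "sum W1 (insert (last P, hd ys) A) = W1 (last P, hd ys) + sum W1 A"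
    using finA d1 by simp
  also have "sum W1 A = sum w A" using fA assms(7) by (intro sum.cong) auto
  also have "sum W1 C = sum W C" using fC assms(6) by (intro sum.cong) auto
  finally have s1: "sum W1 (cyc (P @ ys)) = W1 (last P, hd ys) + sum w A + sum W C" .
  have s2: "sum W (cyc (hd P # ys)) = W (hd P, hd ys) + sum W C"
    unfolding c2 using finA d4 by simp
  show ?thesis using s1 s2 assms(5)
    unfolding path_edges_def path_edge_list_def A_def by (simp add: add_ac)
qed

lemma sig_notin: "x \<notin> hd ` set Qs \<Longrightarrow> sig Qs x = x"
  by (induction Qs) auto

lemma main:
  fixes w W :: "'v \<times> 'v \<Rightarrow> 'a::comm_monoid_add"
  assumes "distinct vs" "length vs \<ge> 2"
    "\<forall>P\<in>set Qs. P \<noteq> [] \<and> distinct P \<and> hd P \<in> set vs \<and> set (tl P) \<inter> set vs = {}"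
    "disj Qs" "\<forall>x\<in>set vs. \<forall>y. W (x, y) = w (sig Qs x, y)"
  shows "\<exists>vs'. foldl (\<lambda>S P. expand_path P S) (cyc vs) Qs = cyc vs' \<and> distinct vs' \<and>
     length vs' \<ge> 2 \<and> set vs' = set vs \<union> (\<Union>P\<in>set Qs. set (tl P)) \<and>
     sum w (cyc vs') = sum W (cyc vs) + (\<Sum>P\<leftarrow>Qs. sum w (path_edges P))"
  using assms
proof (induction Qs arbitrary: vs W)
  case Nil
  have "sum W (cyc vs) = sum w (cyc vs)"
    using Nil.prems(5) by (intro sum.cong) (auto dest: fst_cyc)
  then show ?case using Nil.prems by (intro exI[of _ vs]) auto
next
  case (Cons P Qs)
  define u where "u = hd P"
  have Pprops: "P \<noteq> []" "distinct P" "u \<in> set vs" "set (tl P) \<inter> set vs = {}"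
    using Cons.prems(3) unfolding u_def by auto
  obtain a b where vsab: "vs = a @ u # b" using Pprops(3) split_list by metis
  define ys where "ys = b @ a"
  have cv: "cyc vs = cyc (u # ys)"
  proof (cases "a = []")
    case True then show ?thesis using vsab ys_def by simp
  next
    case False then show ?thesis using vsab ys_def cyc_rot[of a "u # b"] by simp
  qed
  have ysne: "ys \<noteq> []" using Cons.prems(2) vsab ys_def by auto
  have setvs: "set vs = insert u (set ys)" using vsab ys_def by auto
  have uys: "u \<notin> set ys" using Cons.prems(1) vsab ys_def by auto
  have dys: "distinct ys" using Cons.prems(1) vsab ys_def by auto
  have setP: "set P = insert u (set (tl P))" using Pprops(1) unfolding u_def
    by (cases P) auto
  have Pys: "set P \<inter> set ys = {}" using setP uys Pprops(4) setvs by auto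
  have hdP: "hd P = u" using u_def by simp
  have exp: "expand_path P (cyc vs) = cyc (P @ ys)"
    using expand_path_cyc[OF Pprops(2) Pprops(1) ysne Pys] cv hdP by simp
  define W1 where "W1 = (\<lambda>(x, y). w (sig Qs x, y))"
  have disjP: "\<forall>Q\<in>set Qs. set P \<inter> set Q = {}" "disj Qs" using Cons.prems(4) by auto
  have heads: "\<And>x. x \<in> set P \<Longrightarrow> x \<notin> hd ` set Qs"
  proof
    fix x assume "x \<in> set P" "x \<in> hd ` set Qs"
    then obtain Q where "Q \<in> set Qs" "x = hd Q" by auto
    then have "x \<in> set Q" using Cons.prems(3) by (cases Q) auto
    then show False using disjP(1) \<open>Q \<in> set Qs\<close> \<open>x \<in> set P\<close> by blast
  qed
  have IH: "\<exists>vs'. foldl (\<lambda>S P. expand_path P S) (cyc (P @ ys)) Qs = cyc vs' \<and> distinct vs' \<and>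
     length vs' \<ge> 2 \<and> set vs' = set (P @ ys) \<union> (\<Union>P\<in>set Qs. set (tl P)) \<and>
     sum w (cyc vs') = sum W1 (cyc (P @ ys)) + (\<Sum>P\<leftarrow>Qs. sum w (path_edges P))"
  proof (rule Cons.IH)
    show "distinct (P @ ys)" using Pprops(2) dys Pys by simp
    show "2 \<le> length (P @ ys)" using Pprops(1) ysne by (cases P; cases ys) auto
    show "\<forall>Pa\<in>set Qs. Pa \<noteq> [] \<and> distinct Pa \<and> hd Pa \<in> set (P @ ys) \<and> set (tl Pa) \<inter> set (P @ ys) = {}"
    proof
      fix Q assume Q: "Q \<in> set Qs"
      then have q: "Q \<noteq> [] \<and> distinct Q \<and> hd Q \<in> set vs \<and> set (tl Q) \<inter> set vs = {}"
        using Cons.prems(3) by auto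
      have "set (tl Q) \<subseteq> set Q" by (cases Q) auto
      then have "set (tl Q) \<inter> set P = {}" using disjP(1) Q by blast
      then show "Q \<noteq> [] \<and> distinct Q \<and> hd Q \<in> set (P @ ys) \<and> set (tl Q) \<inter> set (P @ ys) = {}"
        using q setvs setP by auto
    qed
    show "disj Qs" by (rule disjP(2))
    show "\<forall>x\<in>set (P @ ys). \<forall>y. W1 (x, y) = w (sig Qs x, y)" unfolding W1_def by simp
  qed
  then obtain vs' where vs': "foldl (\<lambda>S P. expand_path P S) (cyc (P @ ys)) Qs = cyc vs'" "distinct vs'"
     "length vs' \<ge> 2" "set vs' = set (P @ ys) \<union> (\<Union>P\<in>set Qs. set (tl P))"
     "sum w (cyc vs') = sum W1 (cyc (P @ ys)) + (\<Sum>P\<leftarrow>Qs. sum w (path_edges P))" by blast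
  have lastP: "last P \<in> set P" using Pprops(1) by simp
  have st: "sum W1 (cyc (P @ ys)) = sum W (cyc (hd P # ys)) + sum w (path_edges P)"
  proof (rule sum_step[OF Pprops(2) Pprops(1) ysne Pys])
    have "W (hd P, hd ys) = w (sig (P # Qs) (hd P), hd ys)"
      using Cons.prems(5) Pprops(3) hdP by auto
    also have "\<dots> = w (last P, hd ys)" by simp
    also have "\<dots> = W1 (last P, hd ys)" unfolding W1_def
      using sig_notin[OF heads[OF lastP]] by simp
    finally show "W (hd P, hd ys) = W1 (last P, hd ys)" .
    show "\<forall>x\<in>set ys. \<forall>y. W1 (x, y) = W (x, y)"
      using Cons.prems(5) setvs uys hdP unfolding W1_def by auto
    show "\<forall>x\<in>set P. \<forall>y. W1 (x, y) = w (x, y)"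
      unfolding W1_def using sig_notin[OF heads] by auto
  qed
  show ?case
  proof (intro exI[of _ vs'] conjI)
    show "foldl (\<lambda>S P. expand_path P S) (cyc vs) (P # Qs) = cyc vs'" using exp vs'(1) by simp
    show "distinct vs'" "2 \<le> length vs'" using vs' by auto
    show "set vs' = set vs \<union> (\<Union>P\<in>set (P # Qs). set (tl P))"
      using vs'(4) setvs setP by auto
    show "sum w (cyc vs') = sum W (cyc vs) + (\<Sum>P\<leftarrow>P # Qs. sum w (path_edges P))"
      using vs'(5) st cv hdP by (simp add: add_ac)
  qed
qed

lemma contract_edge_props:
  "fst (contract_edge (u, v) G) = fst G - {v}"
  "snd (contract_edge (u, v) G) (x, y) = (if x = u then snd G (v, y) else snd G (x, y))"
  by (cases G; simp)+

lemma contract_path_props: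
  "distinct us \<Longrightarrow> us \<noteq> [] \<Longrightarrow> fst (contract_path us G) = fst G - set (tl us) \<and>
   (\<forall>x y. x \<notin> set (tl us) \<longrightarrow> snd (contract_path us G) (x, y) =
      (if x = hd us then snd G (last us, y) else snd G (x, y)))"
proof (induction us)
  case Nil then show ?case by simp
next
  case (Cons a rest)
  show ?case
  proof (cases rest)
    case Nil then show ?thesis unfolding contract_path_def path_edge_list_def by simp
  next
    case (Cons b rest')
    have cp: "contract_path (a # rest) G = contract_edge (a, b) (contract_path rest G)"
      unfolding contract_path_def using Cons by (simp add: pel_cons2)
    have IH: "fst (contract_path rest G) = fst G - set rest' \<and>
      (\<forall>x y. x \<notin> set rest' \<longrightarrow> snd (contract_path rest G) (x, y) =
      (if x = b then snd G (last rest, y) else snd G (x, y)))"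
      using Cons.IH Cons.prems Cons by simp
    have bn: "b \<notin> set rest'" "a \<noteq> b" "a \<notin> set rest'" using Cons.prems Cons by auto
    show ?thesis unfolding cp contract_edge_props using IH bn Cons by auto
  qed
qed

lemma contract_paths_props:
  "\<forall>P\<in>set Qs. P \<noteq> [] \<and> distinct P \<Longrightarrow> disj Qs \<Longrightarrow>
   fst (contract_paths Qs G) = fst G - (\<Union>P\<in>set Qs. set (tl P)) \<and>
   (\<forall>x y. x \<notin> (\<Union>P\<in>set Qs. set (tl P)) \<longrightarrow> snd (contract_paths Qs G) (x, y) = snd G (sig Qs x, y))"
proof (induction Qs)
  case Nil then show ?case unfolding contract_paths_def by simp
next
  case (Cons P Qs)
  have cp: "contract_paths (P # Qs) G = contract_path P (contract_paths Qs G)"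
    unfolding contract_paths_def by simp
  have IH: "fst (contract_paths Qs G) = fst G - (\<Union>P\<in>set Qs. set (tl P)) \<and>
   (\<forall>x y. x \<notin> (\<Union>P\<in>set Qs. set (tl P)) \<longrightarrow> snd (contract_paths Qs G) (x, y) = snd G (sig Qs x, y))"
    using Cons by simp
  have Pp: "P \<noteq> []" "distinct P" using Cons.prems by auto
  have CP: "fst (contract_path P (contract_paths Qs G)) = fst (contract_paths Qs G) - set (tl P) \<and>
   (\<forall>x y. x \<notin> set (tl P) \<longrightarrow> snd (contract_path P (contract_paths Qs G)) (x, y) =
      (if x = hd P then snd (contract_paths Qs G) (last P, y) else snd (contract_paths Qs G) (x, y)))"
    by (rule contract_path_props[OF Pp(2) Pp(1)])
  have dj: "\<forall>Q\<in>set Qs. set P \<inter> set Q = {}" using Cons.prems by simp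
  have lP: "last P \<in> set P" using Pp by simp
  have l1: "last P \<notin> (\<Union>P\<in>set Qs. set (tl P))"
  proof
    assume "last P \<in> (\<Union>P\<in>set Qs. set (tl P))"
    then obtain Q where "Q \<in> set Qs" "last P \<in> set (tl Q)" by auto
    moreover have "set (tl Q) \<subseteq> set Q" by (cases Q) auto
    ultimately show False using dj lP by blast
  qed
  have l2: "last P \<notin> hd ` set Qs"
  proof
    assume "last P \<in> hd ` set Qs"
    then obtain Q where "Q \<in> set Qs" "last P = hd Q" by auto
    have "hd Q \<in> set Q" using Cons.prems(1) \<open>Q \<in> set Qs\<close> by simp
    then have "last P \<in> set P \<inter> set Q" using lP \<open>last P = hd Q\<close> by simp
    then show False using dj \<open>Q \<in> set Qs\<close> by simp
  qed
  show ?case unfolding cp using CP IH l1 sig_notin[OF l2] by auto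
qed

lemma disj_of_idx:
  "\<forall>i < length Qs. \<forall>j < length Qs. i \<noteq> j \<longrightarrow> set (Qs ! i) \<inter> set (Qs ! j) = {} \<Longrightarrow> disj Qs"
proof (induction Qs)
  case Nil then show ?case by simp
next
  case (Cons P Qs)
  have "disj Qs"
  proof (rule Cons.IH, intro allI impI)
    fix i j assume "i < length Qs" "j < length Qs" "i \<noteq> j"
    then show "set (Qs ! i) \<inter> set (Qs ! j) = {}" using Cons.prems[rule_format, of "Suc i" "Suc j"] by simp
  qed
  moreover have "\<forall>Q\<in>set Qs. set P \<inter> set Q = {}"
  proof
    fix Q assume "Q \<in> set Qs"
    then obtain j where "j < length Qs" "Q = Qs ! j" by (metis in_set_conv_nth)
    then show "set P \<inter> set Q = {}" using Cons.prems[rule_format, of 0 "Suc j"] by simp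
  qed
  ultimately show ?case by simp
qed

lemma sum_paths:
  fixes w :: "'v \<times> 'v \<Rightarrow> 'a::comm_monoid_add"
  shows "\<forall>P\<in>set Qs. P \<noteq> [] \<Longrightarrow> disj Qs \<Longrightarrow>
   (\<Sum>P\<leftarrow>Qs. sum w (path_edges P)) = sum w (\<Union>P\<in>set Qs. path_edges P)"
proof (induction Qs)
  case Nil then show ?case by simp
next
  case (Cons P Qs)
  have dj: "\<forall>Q\<in>set Qs. set P \<inter> set Q = {}" using Cons.prems by simp
  have pe: "\<And>R a b. (a, b) \<in> path_edges R \<Longrightarrow> a \<in> set R"
    unfolding path_edges_def path_edge_list_def by (auto dest: fst_zip)
  have "path_edges P \<inter> (\<Union>P\<in>set Qs. path_edges P) = {}"
    using dj pe by fastforce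
  moreover have "finite (path_edges R)" for R :: "'v list" unfolding path_edges_def by simp
  ultimately have "sum w (\<Union>P\<in>set (P # Qs). path_edges P) = sum w (path_edges P) + sum w (\<Union>P\<in>set Qs. path_edges P)"
    by (simp add: sum.union_disjoint)
  then show ?case using Cons by simp
qed

lemma ham_cyc: "ham_cycle V T \<longleftrightarrow> (\<exists>vs. distinct vs \<and> set vs = V \<and> length vs \<ge> 2 \<and> T = cyc vs)"
proof -
  have eq: "{(vs ! i, vs ! ((i + 1) mod length vs)) | i. i < length vs} = cyc vs"
    if "length vs \<ge> 2" for vs :: "'a list"
  proof -
    have nth: "(tl vs @ [hd vs]) ! i = vs ! ((i + 1) mod length vs)" if "i < length vs" for i
    proof (cases "i < length vs - 1")
      case True then show ?thesis using that by (simp add: nth_append nth_tl)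
    next
      case False
      then have ii: "i = length vs - 1" using \<open>i < length vs\<close> by simp
      have ne: "vs \<noteq> []" using \<open>length vs \<ge> 2\<close> by auto
      have a: "(tl vs @ [hd vs]) ! i = hd vs" using ii ne by (simp add: nth_append)
      have b: "(i + 1) mod length vs = 0" using ii ne by simp
      show ?thesis unfolding a b using hd_conv_nth[OF ne] .
    qed
    have len: "length (tl vs @ [hd vs]) = length vs" using that by simp
    show ?thesis unfolding cyc_def set_zip using nth len by auto
  qed
  show ?thesis
  proof
    assume "ham_cycle V T"
    then obtain vs where h: "distinct vs" "set vs = V" "length vs \<ge> 2"
      "T = {(vs ! i, vs ! ((i + 1) mod length vs)) | i. i < length vs}" unfolding ham_cycle_def by blast
    then show "\<exists>vs. distinct vs \<and> set vs = V \<and> length vs \<ge> 2 \<and> T = cyc vs" using eq[OF h(3)] by auto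
  next
    assume "\<exists>vs. distinct vs \<and> set vs = V \<and> length vs \<ge> 2 \<and> T = cyc vs"
    then obtain vs where h: "distinct vs" "set vs = V" "length vs \<ge> 2" "T = cyc vs" by blast
    then show "ham_cycle V T" unfolding ham_cycle_def using eq[OF h(3)] by auto
  qed
qed

theorem proposition12:
  fixes V :: "'v set" and w :: "'v \<times> 'v \<Rightarrow> nat ^ 'k::finite"
    and Qs :: "'v list list" and T' :: "('v \<times> 'v) set"
    and V' :: "'v set" and w' :: "'v \<times> 'v \<Rightarrow> nat ^ 'k"
  assumes "finite V"
    and "\<forall>P \<in> set Qs. is_path V P"
    and "\<forall>i < length Qs. \<forall>j < length Qs. i \<noteq> j \<longrightarrow> set (Qs ! i) \<inter> set (Qs ! j) = {}"
    and "(V', w') = contract_paths Qs (V, w)"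
    and "ham_cycle V' T'"
  shows "ham_cycle V (expand_paths Qs T') \<and>
         sum w (expand_paths Qs T') = sum w' T' + sum w (\<Union>P \<in> set Qs. path_edges P)"
proof -
  have dj: "disj Qs" using disj_of_idx assms(3) by blast
  have pp: "\<forall>P\<in>set Qs. P \<noteq> [] \<and> distinct P" using assms(2) unfolding is_path_def by auto
  define R where "R = (\<Union>P\<in>set Qs. set (tl P))"
  have C: "fst (contract_paths Qs (V, w)) = V - R \<and>
   (\<forall>x y. x \<notin> R \<longrightarrow> snd (contract_paths Qs (V, w)) (x, y) = w (sig Qs x, y))"
    using contract_paths_props[OF pp dj, of "(V, w)"] unfolding R_def by simp
  have V': "V' = V - R" and w': "\<forall>x y. x \<notin> R \<longrightarrow> w' (x, y) = w (sig Qs x, y)"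
    using C assms(4) by (metis fst_conv snd_conv)+
  obtain vs where vs: "distinct vs" "set vs = V'" "length vs \<ge> 2" "T' = cyc vs"
    using assms(5) ham_cyc by metis
  have RV: "R \<subseteq> V" unfolding R_def using assms(2) unfolding is_path_def
    by (auto dest: list.set_sel(2))
  have cond: "\<forall>P\<in>set Qs. P \<noteq> [] \<and> distinct P \<and> hd P \<in> set vs \<and> set (tl P) \<inter> set vs = {}"
  proof
    fix P assume P: "P \<in> set Qs"
    have nd: "P \<noteq> []" "distinct P" using pp P by auto
    have hV: "hd P \<in> V" using assms(2) P nd unfolding is_path_def by (meson hd_in_set subsetD)
    have "hd P \<notin> R"
    proof
      assume "hd P \<in> R"
      then obtain Q where Q: "Q \<in> set Qs" "hd P \<in> set (tl Q)" unfolding R_def by auto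
      show False
      proof (cases "Q = P")
        case True then show False using Q nd by (cases P) auto
      next
        case False
        obtain i j where "i < length Qs" "j < length Qs" "Qs ! i = P" "Qs ! j = Q"
          using P Q(1) by (metis in_set_conv_nth)
        then have "set P \<inter> set Q = {}" using assms(3) False by metis
        then show False using Q nd by (cases P; cases Q) auto
      qed
    qed
    moreover have "set (tl P) \<subseteq> R" unfolding R_def using P by auto
    ultimately show "P \<noteq> [] \<and> distinct P \<and> hd P \<in> set vs \<and> set (tl P) \<inter> set vs = {}"
      using nd hV vs(2) V' by auto
  qed
  have W: "\<forall>x\<in>set vs. \<forall>y. w' (x, y) = w (sig Qs x, y)" using w' vs(2) V' by auto
  obtain vs' where M: "foldl (\<lambda>S P. expand_path P S) (cyc vs) Qs = cyc vs'" "distinct vs'"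
     "length vs' \<ge> 2" "set vs' = set vs \<union> (\<Union>P\<in>set Qs. set (tl P))"
     "sum w (cyc vs') = sum w' (cyc vs) + (\<Sum>P\<leftarrow>Qs. sum w (path_edges P))"
    using main[OF vs(1) vs(3) cond dj W] by blast
  have e: "expand_paths Qs T' = cyc vs'" unfolding expand_paths_def using M(1) vs(4) by simp
  have "set vs' = V" using M(4) vs(2) V' RV unfolding R_def by auto
  then have "ham_cycle V (expand_paths Qs T')" using e M(2,3) ham_cyc by metis
  moreover have "sum w (expand_paths Qs T') = sum w' T' + sum w (\<Union>P \<in> set Qs. path_edges P)"
    using e M(5) vs(4) sum_paths[of Qs w] pp dj by simp
  ultimately show ?thesis by simp
qed

end
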